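(* Let $0<w_1<\dots<w_n$ be integers with $\sum_i w_i<2^n-1$, and let $2^{n/2}\le\Delta\le d<2^n$. Let $j\in\{0,\dots,n-1\}$ satisfy $\#\{t:f_t>2^j\}>\frac{\Delta}{2^{j+1}n}$. Set $h=2^j+1$, $m=\lceil \Delta/(2^{j+1}n)\rceil$ and $X=\{t: f_t\ge h\}$, so that $|X|\ge m$. Let $P$ be a parameter with $2\le P\le 2m$, and set $k=\lceil m/(4P)\rceil$. Choose a uniformly random prime $p\in[P,2P]$ and then a uniformly random $r^*\in\mathbb{Z}_p$. For $r\in\mathbb{Z}_p$ let $B_r=\{S\subseteq[n]: w(S)\equiv r\pmod p\}$. Then with probability at least $\Omega(1/n)$ over the choice of $p$ and $r^*$, there are at least $k$ integers $t\in\mathbb{N}$ with $\#\{S\in B_{r^*}: w(S)=t\}\ge h$.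
   Context: Write $[n]=\{1,\dots,n\}$ and $w(S)=\sum_{i\in S}w_i$. The frequency is $f_t=\#\{S\subseteq[n]:w(S)=t\}$. The parameter is $d=\sum_{0\le t<2^n}\max\{0,f_t-1\}$. The constant in $\Omega(\cdot)$ is absolute. *)

theory Defs
  imports Complex_Main "HOL-Computational_Algebra.Primes"
begin

definition wsum :: "(nat \<Rightarrow> nat) \<Rightarrow> nat set \<Rightarrow> nat" where
  "wsum w S = (\<Sum>i\<in>S. w i)"

definition freq :: "nat \<Rightarrow> (nat \<Rightarrow> nat) \<Rightarrow> nat \<Rightarrow> nat" where
  "freq n w t = card {S. S \<subseteq> {1..n} \<and> wsum w S = t}"

text \<open>d = sum over 0 <= t < 2^n of max(0, f_t - 1) (truncated nat subtraction)\<close>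
definition dpar :: "nat \<Rightarrow> (nat \<Rightarrow> nat) \<Rightarrow> nat" where
  "dpar n w = (\<Sum>t<2^n. freq n w t - 1)"

definition primes_in :: "real \<Rightarrow> nat set" where
  "primes_in P = {p. prime p \<and> P \<le> real p \<and> real p \<le> 2 * P}"

definition heavy_count :: "nat \<Rightarrow> (nat \<Rightarrow> nat) \<Rightarrow> nat \<Rightarrow> nat \<Rightarrow> nat \<Rightarrow> nat" where
  "heavy_count n w p r h =
     card {t. h \<le> card {S. S \<subseteq> {1..n} \<and> wsum w S mod p = r \<and> wsum w S = t}}"

definition success_prob :: "nat \<Rightarrow> (nat \<Rightarrow> nat) \<Rightarrow> real \<Rightarrow> nat \<Rightarrow> nat \<Rightarrow> real" where
  "success_prob n w P h k =
     (\<Sum>p\<in>primes_in P. real (card {r. r < p \<and> k \<le> heavy_count n w p r h}) / real p)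
       / real (card (primes_in P))"

end

theory Submission
  imports Defs "HOL-Analysis.Analysis"
begin


lemma prime_trial:
  fixes p b :: nat
  assumes "1 < p" "\<forall>d\<in>set [2..<b]. \<not> d dvd p" "p < b*b"
  shows "prime p"
proof (rule ccontr)
  assume np: "\<not> prime p"
  then obtain m where m: "m dvd p" "m \<noteq> 1" "m \<noteq> p" using assms(1) prime_nat_iff by blast
  then obtain q where q: "p = m * q" by (auto elim: dvdE)
  have m0: "m \<noteq> 0"
  proof
    assume "m = 0"
    with m(1) have "p = 0" by simp
    with assms(1) show False by simp
  qed
  have q1: "q \<noteq> 1" using q m by auto
  have q0: "q \<noteq> 0"
  proof
    assume "q = 0"
    with q have "p = 0" by simp
    with assms(1) show False by simp
  qed
  define a where "a = min m q"
  have a2: "2 \<le> a" using m0 q0 m(2) q1 by (auto simp: a_def)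
  have "a * a \<le> p" unfolding q a_def by (simp add: mult_mono)
  hence "a * a < b * b" using assms(3) by linarith
  hence "a < b" by (meson mult_le_mono not_le)
  moreover have "a dvd p" unfolding a_def q by (simp add: min_def)
  ultimately show False using assms(2) a2 by auto
qed

lemma prod_pf_le:
  fixes n :: nat
  assumes "n > 0" "S \<subseteq> prime_factors n"
  shows "(\<Prod>p\<in>S. p) \<le> n"
proof -
  have "(\<Prod>p\<in>S. p) \<le> (\<Prod>p\<in>S. p ^ multiplicity p n)"
  proof (intro prod_mono conjI)
    fix p assume "p \<in> S"
    hence "prime p" "multiplicity p n > 0" using assms prime_factors_multiplicity by auto
    thus "p \<le> p ^ multiplicity p n"
      by (metis One_nat_def Suc_leI power_increasing power_one_right prime_gt_0_nat)
  qed auto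
  also have "\<dots> dvd (\<Prod>p\<in>prime_factors n. p ^ multiplicity p n)"
    by (rule prod_dvd_prod_subset) (use assms in auto)
  hence "(\<Prod>p\<in>S. p ^ multiplicity p n) \<le> (\<Prod>p\<in>prime_factors n. p ^ multiplicity p n)"
    using assms(1) prime_factorization_nat dvd_imp_le by (metis)
  also have "\<dots> = n" using prime_factorization_nat[OF assms(1)] by simp
  finally show ?thesis .
qed

lemma primes_dvd_prod_le:
  fixes D :: nat
  assumes "D > 0" "\<And>p. p \<in> S \<Longrightarrow> prime p \<and> p dvd D"
  shows "(\<Prod>p\<in>S. p) \<le> D"
  using assms by (intro prod_pf_le) (auto simp: prime_factors_dvd)

lemma mult_eq_card:
  fixes p m :: nat
  assumes "prime p" "m > 0"
  shows "multiplicity p m = card {i\<in>{1..m}. p ^ i dvd m}"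
proof -
  have "p ^ multiplicity p m \<le> m" using multiplicity_dvd[of p m] assms(2) dvd_imp_le by blast
  moreover have "multiplicity p m < p ^ multiplicity p m"
    using assms(1) prime_gt_1_nat less_exp[of "multiplicity p m"]
    by (metis dual_order.strict_trans1 power_mono nat_less_le prime_ge_2_nat zero_le)
  ultimately have le: "multiplicity p m \<le> m" by linarith
  have nu: "\<not> is_unit p" using assms(1) not_prime_unit by blast
  have m0: "m \<noteq> 0" using assms(2) by simp
  have "{i\<in>{1..m}. p ^ i dvd m} = {1..multiplicity p m}"
  proof (intro equalityI subsetI)
    fix x assume "x \<in> {i\<in>{1..m}. p ^ i dvd m}"
    hence "p ^ x dvd m" "1 \<le> x" by auto
    hence "x \<le> multiplicity p m" using multiplicity_geI[OF m0 nu] by blast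
    thus "x \<in> {1..multiplicity p m}" using \<open>1 \<le> x\<close> by auto
  next
    fix x assume "x \<in> {1..multiplicity p m}"
    thus "x \<in> {i\<in>{1..m}. p ^ i dvd m}" using le multiplicity_dvd'[of x p m] by auto
  qed
  thus ?thesis by simp
qed

lemma suc_div_split:
  fixes q n :: nat
  assumes "q > 0"
  shows "Suc n div q = n div q + (if q dvd Suc n then 1 else 0)"
  using assms by (simp add: div_Suc mod_eq_0_iff_dvd)

lemma pow_gt_self:
  fixes p i :: nat
  assumes "2 \<le> p"
  shows "i < p ^ i"
proof -
  have "i < 2 ^ i" by (rule less_exp)
  also have "2 ^ i \<le> p ^ i" using assms by (rule power_mono) simp
  finally show ?thesis .
qed

lemma legendre:
  fixes p :: nat
  assumes "prime p"
  shows "multiplicity p (fact n :: nat) = (\<Sum>i\<in>{1..n}. n div p ^ i)"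
proof (induction n)
  case 0
  then show ?case by simp
next
  case (Suc n)
  have p2: "2 \<le> p" using assms prime_ge_2_nat by blast
  have pe: "prime_elem p" using assms by simp
  have "multiplicity p (fact (Suc n) :: nat) = multiplicity p (Suc n * fact n)"
    by (simp add: fact_Suc)
  also have "\<dots> = multiplicity p (Suc n) + multiplicity p (fact n :: nat)"
    by (rule prime_elem_multiplicity_mult_distrib[OF pe]) auto
  also have "multiplicity p (Suc n) = card {i\<in>{1..Suc n}. p ^ i dvd Suc n}"
    using mult_eq_card[OF assms, of "Suc n"] by simp
  also have "\<dots> = (\<Sum>i\<in>{i\<in>{1..Suc n}. p ^ i dvd Suc n}. 1)" by simp
  also have "\<dots> = (\<Sum>i\<in>{1..Suc n}. if p ^ i dvd Suc n then 1 else 0)"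
    by (rule sum.inter_filter) simp
  also have "multiplicity p (fact n :: nat) = (\<Sum>i\<in>{1..n}. n div p ^ i)" by (rule Suc.IH)
  also have "\<dots> = (\<Sum>i\<in>{1..Suc n}. n div p ^ i)"
  proof -
    have "n div p ^ Suc n = 0" using pow_gt_self[OF p2, of "Suc n"] by simp
    thus ?thesis by simp
  qed
  also have "(\<Sum>i\<in>{1..Suc n}. if p ^ i dvd Suc n then 1 else 0) + (\<Sum>i\<in>{1..Suc n}. n div p ^ i)
      = (\<Sum>i\<in>{1..Suc n}. Suc n div p ^ i)"
    unfolding sum.distrib[symmetric]
    by (intro sum.cong refl) (use p2 suc_div_split in auto)
  finally show ?case .
qed

lemma legendre_ext:
  fixes p :: nat
  assumes "prime p" "n \<le> K"
  shows "multiplicity p (fact n :: nat) = (\<Sum>i\<in>{1..K}. n div p ^ i)"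
proof -
  have p2: "2 \<le> p" using assms prime_ge_2_nat by blast
  have "(\<Sum>i\<in>{1..n}. n div p ^ i) = (\<Sum>i\<in>{1..K}. n div p ^ i)"
  proof (rule sum.mono_neutral_left)
    show "\<forall>i\<in>{1..K} - {1..n}. n div p ^ i = 0"
    proof
      fix i assume "i \<in> {1..K} - {1..n}"
      hence "n < i" by auto
      hence "n < p ^ i" using pow_gt_self[OF p2, of i] by linarith
      thus "n div p ^ i = 0" by simp
    qed
  qed (use assms in auto)
  thus ?thesis using legendre[OF assms(1)] by simp
qed

lemma div_two_bounds:
  fixes q N :: nat
  assumes "q > 0"
  shows "2 * (N div q) \<le> 2 * N div q" "2 * N div q \<le> 2 * (N div q) + 1"
proof -
  obtain a b where ab: "N = q * a + b" "b < q"
    using assms div_mult_mod_eq mod_less_divisor by (metis add.commute mult.commute)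
  have "2 * N = q * (2 * a) + 2 * b" using ab by simp
  hence e: "2 * N div q = 2 * a + 2 * b div q" using assms by simp
  have "N div q = a" using ab assms by simp
  moreover have "2 * b div q \<le> 1"
  proof -
    have "2 * b < q * 2" using ab by simp
    hence "2 * b div q < 2" using assms by (simp add: div_less_iff_less_mult)
    thus ?thesis by simp
  qed
  ultimately show "2 * (N div q) \<le> 2 * N div q" "2 * N div q \<le> 2 * (N div q) + 1"
    using e by auto
qed

lemma binom_mult:
  fixes p N :: nat
  assumes "prime p"
  shows "multiplicity p (2 * N choose N) = (\<Sum>i\<in>{1..2*N}. 2 * N div p ^ i - 2 * (N div p ^ i))"
proof -
  have pe: "prime_elem p" using assms by simp
  have pp: "\<And>i. p ^ i > 0" using assms prime_gt_0_nat by simp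
  have "fact N * fact (2 * N - N) * (2 * N choose N) = (fact (2 * N) :: nat)"
    by (rule binomial_fact_lemma) simp
  hence eq: "fact N * fact N * (2 * N choose N) = (fact (2 * N) :: nat)" by simp
  have "multiplicity p (fact (2 * N) :: nat)
      = multiplicity p (fact N :: nat) + multiplicity p (fact N :: nat) + multiplicity p (2 * N choose N)"
    unfolding eq[symmetric]
    by (simp add: prime_elem_multiplicity_mult_distrib[OF pe] zero_less_binomial)
  hence "multiplicity p (2 * N choose N)
      = (\<Sum>i\<in>{1..2*N}. 2 * N div p ^ i) - 2 * (\<Sum>i\<in>{1..2*N}. N div p ^ i)"
    using legendre_ext[OF assms, of N "2*N"] legendre[OF assms, of "2*N"] by simp
  also have "\<dots> = (\<Sum>i\<in>{1..2*N}. 2 * N div p ^ i - 2 * (N div p ^ i))"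
    by (subst sum_subtractf_nat) (use div_two_bounds(1)[OF pp] in \<open>auto simp: sum_distrib_left\<close>)
  finally show ?thesis .
qed

lemma binom_terms:
  fixes p N i :: nat
  assumes "prime p"
  shows "2 * N div p ^ i - 2 * (N div p ^ i) \<le> 1"
    and "2 * N < p ^ i \<Longrightarrow> 2 * N div p ^ i - 2 * (N div p ^ i) = 0"
proof -
  have pp: "p ^ i > 0" using assms prime_gt_0_nat by simp
  show "2 * N div p ^ i - 2 * (N div p ^ i) \<le> 1" using div_two_bounds(2)[OF pp, of N] by linarith
  assume "2 * N < p ^ i"
  thus "2 * N div p ^ i - 2 * (N div p ^ i) = 0" by simp
qed

lemma V1:
  fixes p N :: nat
  assumes "prime p" "N > 0"
  shows "p ^ multiplicity p (2 * N choose N) \<le> 2 * N"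
proof (rule ccontr)
  define v where "v = multiplicity p (2 * N choose N)"
  assume "\<not> p ^ multiplicity p (2 * N choose N) \<le> 2 * N"
  hence big: "2 * N < p ^ v" unfolding v_def by simp
  have "v = (\<Sum>i\<in>{1..2*N}. 2 * N div p ^ i - 2 * (N div p ^ i))"
    unfolding v_def by (rule binom_mult[OF assms(1)])
  also have "\<dots> \<le> (\<Sum>i\<in>{1..2*N}. if p ^ i \<le> 2 * N then 1 else 0)"
    by (intro sum_mono) (use binom_terms[OF assms(1)] in \<open>auto simp: not_le\<close>)
  also have "\<dots> = (\<Sum>i\<in>{i\<in>{1..2*N}. p ^ i \<le> 2 * N}. 1)"
    by (rule sum.inter_filter[symmetric]) simp
  also have "\<dots> = card {i\<in>{1..2*N}. p ^ i \<le> 2 * N}" by simp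
  also have "\<dots> \<le> card {1..<v}"
  proof (rule card_mono)
    show "{i\<in>{1..2*N}. p ^ i \<le> 2 * N} \<subseteq> {1..<v}"
    proof
      fix i assume "i \<in> {i\<in>{1..2*N}. p ^ i \<le> 2 * N}"
      hence "1 \<le> i" "p ^ i < p ^ v" using big by auto
      thus "i \<in> {1..<v}" using power_less_imp_less_exp[of p i v] prime_gt_1_nat[OF assms(1)] by auto
    qed
  qed simp
  also have "\<dots> < v"
  proof -
    have "v \<noteq> 0" using big assms(2) by (intro notI) simp
    thus ?thesis by simp
  qed
  finally show False by simp
qed

lemma V2:
  fixes p N :: nat
  assumes "prime p" "2 * N < p * p"
  shows "multiplicity p (2 * N choose N) \<le> 1"
proof -
  have "multiplicity p (2 * N choose N) = (\<Sum>i\<in>{1..2*N}. 2 * N div p ^ i - 2 * (N div p ^ i))"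
    by (rule binom_mult[OF assms(1)])
  also have "\<dots> \<le> (\<Sum>i\<in>{1..2*N}. if i = 1 then 1 else 0)"
  proof (intro sum_mono)
    fix i assume i: "i \<in> {1..2*N}"
    show "2 * N div p ^ i - 2 * (N div p ^ i) \<le> (if i = 1 then 1 else 0)"
    proof (cases "i = 1")
      case True thus ?thesis using binom_terms(1)[OF assms(1), of N 1] by simp
    next
      case False
      hence "2 \<le> i" using i by auto
      hence "p ^ 2 \<le> p ^ i" using prime_gt_1_nat[OF assms(1)] by (intro power_increasing) auto
      hence "2 * N < p ^ i" using assms(2) by (simp add: power2_eq_square)
      thus ?thesis using binom_terms(2)[OF assms(1)] False by simp
    qed
  qed
  also have "\<dots> \<le> 1" by (simp add: sum.delta)
  finally show ?thesis .
qed

lemma V3: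
  fixes p N :: nat
  assumes "prime p" "5 \<le> N" "p \<le> N" "2 * N < 3 * p"
  shows "multiplicity p (2 * N choose N) = 0"
proof -
  have pp: "p > 0" using assms prime_gt_0_nat by simp
  have sq: "2 * N < p * p"
  proof -
    have "(2 * N) * (2 * N) < (3 * p) * (3 * p)" by (rule mult_strict_mono[OF assms(4) assms(4)]) (use pp in simp_all)
    hence a: "4 * (N * N) < 9 * (p * p)" by (simp add: algebra_simps)
    have "5 * N \<le> N * N" using assms(2) by (simp add: mult_le_mono)
    hence b: "20 * N \<le> 4 * (N * N)" by simp
    from a b show ?thesis by linarith
  qed
  have "multiplicity p (2 * N choose N) = (\<Sum>i\<in>{1..2*N}. 2 * N div p ^ i - 2 * (N div p ^ i))"
    by (rule binom_mult[OF assms(1)])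
  also have "\<dots> = (\<Sum>i\<in>{1..2*N}. 0)"
  proof (intro sum.cong refl)
    fix i assume i: "i \<in> {1..2*N}"
    show "2 * N div p ^ i - 2 * (N div p ^ i) = 0"
    proof (cases "i = 1")
      case True
      have "N div p = 1" using assms(3,4) pp by (intro div_nat_eqI) auto
      moreover have "2 * N div p = 2" using assms(3,4) pp by (intro div_nat_eqI) auto
      ultimately show ?thesis using True by simp
    next
      case False
      hence "2 \<le> i" using i by auto
      hence "p ^ 2 \<le> p ^ i" using prime_gt_1_nat[OF assms(1)] by (intro power_increasing) auto
      hence "2 * N < p ^ i" using sq by (simp add: power2_eq_square)
      thus ?thesis using binom_terms(2)[OF assms(1)] by simp
    qed
  qed
  finally show ?thesis by simp
qed

definition prim :: "nat \<Rightarrow> nat" where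
  "prim x = (\<Prod>p\<in>{p. prime p \<and> p \<le> x}. p)"

lemma fin_primes_le: "finite {p::nat. prime p \<and> p \<le> x}"
  by (rule finite_subset[of _ "{..x}"]) auto

lemma fin_primes_le2: "finite {p::nat. prime p \<and> y < p \<and> p \<le> x}"
  by (rule finite_subset[of _ "{..x}"]) auto

lemma prim_pos: "prim x > 0"
  unfolding prim_def by (intro prod_pos) (auto simp: prime_gt_0_nat)

lemma mid_binom_le: "(2 * m + 1 choose m) \<le> 4 ^ m"
proof -
  have "(2 * m + 1 choose m) + (2 * m + 1 choose (m + 1)) = (\<Sum>k\<in>{m, m+1}. 2 * m + 1 choose k)"
    by simp
  also have "\<dots> \<le> (\<Sum>k\<le>2*m+1. 2 * m + 1 choose k)" by (intro sum_mono2) auto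
  also have "\<dots> = 2 ^ (2 * m + 1)" by (rule choose_row_sum)
  also have "\<dots> = 2 * 4 ^ m" by (simp add: power_mult)
  finally have "(2 * m + 1 choose m) + (2 * m + 1 choose (m + 1)) \<le> 2 * 4 ^ m" .
  moreover have "(2 * m + 1 choose (m + 1)) = (2 * m + 1 choose m)"
    using binomial_symmetric[of "m+1" "2*m+1"] by simp
  ultimately show ?thesis by simp
qed

lemma prim_le: "prim x \<le> 4 ^ x"
proof (induction x rule: less_induct)
  case (less x)
  show ?case
  proof (cases "x \<le> 2")
    case True
    have e0: "{p. prime p \<and> p \<le> (0::nat)} = {}" by (auto dest: prime_ge_2_nat)
    have e1: "{p. prime p \<and> p \<le> (1::nat)} = {}" by (auto dest: prime_ge_2_nat)
    have e2: "{p. prime p \<and> p \<le> (2::nat)} = {2}" by (auto dest: prime_ge_2_nat)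
    have "x = 0 \<or> x = 1 \<or> x = 2" using True by auto
    moreover have "prim 0 \<le> 4 ^ 0" unfolding prim_def e0 by simp
    moreover have "prim 1 \<le> 4 ^ 1" unfolding prim_def e1 by simp
    moreover have "prim 2 \<le> 4 ^ 2" unfolding prim_def e2 by simp
    ultimately show ?thesis by auto
  next
    case False
    show ?thesis
    proof (cases "even x")
      case True
      have "\<not> prime x"
      proof
        assume "prime x"
        moreover have "2 dvd x" using True by simp
        ultimately have "2 = x" using prime_nat_iff by force
        thus False using False by simp
      qed
      have "{p. prime p \<and> p \<le> x} = {p. prime p \<and> p \<le> x - 1}"
      proof -
        { fix p
          have "(prime p \<and> p \<le> x) = (prime p \<and> p \<le> x - 1)"
          proof (cases "p = x")
            case True thus ?thesis using \<open>\<not> prime x\<close> by simp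
          next
            case False thus ?thesis by auto
          qed }
        thus ?thesis by simp
      qed
      hence "prim x = prim (x - 1)" unfolding prim_def by simp
      also have "\<dots> \<le> 4 ^ (x - 1)" using less.IH[of "x - 1"] False by simp
      also have "\<dots> \<le> 4 ^ x" by (intro power_increasing) auto
      finally show ?thesis .
    next
      case odd: False
      then obtain m where xm: "x = 2 * m + 1" using oddE by blast
      have m1: "1 \<le> m" using False xm by simp
      define C where "C = (2 * m + 1 choose m)"
      have C0: "C > 0" unfolding C_def by (simp add: zero_less_binomial)
      have split: "{p. prime p \<and> p \<le> x} = {p. prime p \<and> p \<le> m + 1} \<union> {p. prime p \<and> m + 1 < p \<and> p \<le> 2 * m + 1}"
        using xm by auto
      have "prim x = prim (m + 1) * (\<Prod>p\<in>{p. prime p \<and> m + 1 < p \<and> p \<le> 2 * m + 1}. p)"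
        unfolding prim_def split by (subst prod.union_disjoint) (auto intro: fin_primes_le fin_primes_le2)
      also have "(\<Prod>p\<in>{p. prime p \<and> m + 1 < p \<and> p \<le> 2 * m + 1}. p) \<le> C"
      proof (rule primes_dvd_prod_le[OF C0])
        fix p assume p: "p \<in> {p. prime p \<and> m + 1 < p \<and> p \<le> 2 * m + 1}"
        hence pr: "prime p" by simp
        have "fact m * fact (2 * m + 1 - m) * C = (fact (2 * m + 1) :: nat)"
          unfolding C_def by (rule binomial_fact_lemma) simp
        moreover have "p dvd (fact (2 * m + 1) :: nat)"
          using p prime_dvd_fact_iff[OF pr, of "2 * m + 1"] by (simp del: fact_Suc)
        ultimately have "p dvd fact m * fact (m + 1) * C" by (simp add: add.commute)
        moreover have "\<not> p dvd (fact m :: nat)" "\<not> p dvd (fact (m + 1) :: nat)"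
          using p prime_dvd_fact_iff[OF pr, of m] prime_dvd_fact_iff[OF pr, of "m + 1"]
          by (auto simp del: fact_Suc)
        ultimately have "p dvd C" using pr by (simp add: prime_dvd_mult_iff)
        thus "prime p \<and> p dvd C" using pr by simp
      qed
      hence "prim (m + 1) * (\<Prod>p\<in>{p. prime p \<and> m + 1 < p \<and> p \<le> 2 * m + 1}. p) \<le> prim (m + 1) * C"
        by simp
      also have "\<dots> \<le> 4 ^ (m + 1) * 4 ^ m"
        using less.IH[of "m + 1"] xm m1 mid_binom_le[of m] unfolding C_def by (intro mult_mono) auto
      also have "\<dots> = 4 ^ x" using xm by (simp add: power_add[symmetric])
      finally show ?thesis by simp
    qed
  qed
qed

lemma analytic:
  fixes y :: real
  assumes "6561 \<le> y"
  shows "(1 + sqrt y) * ln y \<le> 5 / 36 * y"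
proof -
  define z where "z = y powr (1/8)"
  have y0: "y > 0" using assms by simp
  have z0: "z > 0" unfolding z_def using y0 by simp
  have "z ^ 8 = z powr (real 8)" using z0 by (simp add: powr_realpow)
  also have "\<dots> = y powr (1/8 * 8)" unfolding z_def by (simp add: powr_powr)
  also have "\<dots> = y" using y0 by simp
  finally have zy: "z ^ 8 = y" .
  have "(3::real) ^ 8 \<le> z ^ 8" using zy assms by simp
  have z3: "3 \<le> z"
  proof (rule ccontr)
    assume "\<not> 3 \<le> z"
    hence "z ^ 8 < 3 ^ 8" using z0 by (intro power_strict_mono) auto
    thus False using \<open>(3::real) ^ 8 \<le> z ^ 8\<close> by simp
  qed
  have h: "(z ^ 4)\<^sup>2 = y" using zy by (simp add: power_mult[symmetric])
  have "sqrt y = \<bar>z ^ 4\<bar>" unfolding h[symmetric] by (rule real_sqrt_abs)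
  hence sq: "sqrt y = z ^ 4" using z0 by simp
  have lny: "ln y = 8 * ln z" using zy[symmetric] z0 by (simp add: ln_realpow)
  have e: "5/2 \<le> exp (1::real)" using exp_lower_Taylor_quadratic[of 1] by simp
  have "ln (z / exp 1) \<le> z / exp 1 - 1" using z0 by (intro ln_le_minus_one) simp
  hence "ln z \<le> z / exp 1" using z0 by (simp add: ln_div)
  also have "\<dots> \<le> z / (5/2)" using e z0 by (intro divide_left_mono) auto
  finally have lnz: "ln z \<le> 2/5 * z" by simp
  have z3': "27 \<le> z ^ 3" using power_mono[OF z3, of 3] by simp
  have z4: "81 \<le> z ^ 4" using power_mono[OF z3, of 4] by simp
  have u1: "81 * z \<le> z ^ 5"
  proof -
    have "81 * z \<le> z ^ 4 * z" using z4 z0 by (intro mult_right_mono) auto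
    thus ?thesis by (simp add: power_Suc2[symmetric] del: power_Suc)
  qed
  have u2: "27 * z ^ 5 \<le> z ^ 8"
  proof -
    have "27 * z ^ 5 \<le> z ^ 3 * z ^ 5" using z3' z0 by (intro mult_right_mono) auto
    thus ?thesis by (simp add: power_add[symmetric])
  qed
  have "(1 + sqrt y) * ln y = (1 + z ^ 4) * (8 * ln z)" using sq lny by simp
  also have "\<dots> \<le> (1 + z ^ 4) * (8 * (2/5 * z))"
    using lnz z0 by (intro mult_left_mono) auto
  also have "\<dots> = 16/5 * z + 16/5 * (z ^ 4 * z)" by (simp add: algebra_simps)
  also have "z ^ 4 * z = z ^ 5" by (simp add: power_Suc2[symmetric] del: power_Suc)
  also have "16/5 * z + 16/5 * z ^ 5 \<le> 5 / 36 * z ^ 8" using u1 u2 z0 by linarith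
  finally show ?thesis using zy by simp
qed

lemma ln4: "4/3 \<le> ln (4::real)"
proof -
  have "ln (4::real) = ln (2 ^ 2)" by simp
  also have "\<dots> = 2 * ln 2" by (subst ln_realpow) simp
  finally show ?thesis using ln2_ge_two_thirds by simp
qed

lemma prod_if_const:
  fixes c :: nat
  assumes "finite F"
  shows "(\<Prod>p\<in>F. if Q p then c else 1) = c ^ card {p\<in>F. Q p}"
  using prod.inter_filter[OF assms, of "\<lambda>_. c" Q] by simp

lemma prod_if_id:
  fixes F :: "nat set"
  assumes "finite F"
  shows "(\<Prod>p\<in>F. if Q p then p else 1) = (\<Prod>p\<in>{p\<in>F. Q p}. p)"
  using prod.inter_filter[OF assms, of "\<lambda>p. p" Q] by simp

lemma erdos:
  fixes N :: nat
  assumes "3281 \<le> N"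
  shows "real N / 6 \<le> real (card {p. prime p \<and> N < p \<and> p \<le> 2 * N}) * ln (2 * real N)"
proof -
  define C where "C = (2 * N choose N)"
  define F where "F = prime_factors C"
  define v where "v p = multiplicity p C" for p
  define A where "A = {p\<in>F. p * p \<le> 2 * N}"
  define B where "B = {p\<in>F. 2 * N < p * p \<and> p \<le> N}"
  define D where "D = {p\<in>F. N < p}"
  define pi' where "pi' = card {p. prime p \<and> N < p \<and> p \<le> 2 * N}"
  have N0: "N > 0" using assms by simp
  have C0: "C > 0" unfolding C_def by (simp add: zero_less_binomial)
  have finF: "finite F" unfolding F_def by simp
  have "fact N * fact (2 * N - N) * C = (fact (2 * N) :: nat)"
    unfolding C_def by (rule binomial_fact_lemma) simp
  hence "fact (2 * N) = C * (fact N * fact N :: nat)" by (simp add: algebra_simps)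
  hence Cdvd: "C dvd fact (2 * N)" by (metis dvd_triv_left)
  have Fp: "prime p \<and> p \<le> 2 * N \<and> v p > 0" if pF: "p \<in> F" for p
  proof -
    have pr: "prime p" and vp: "v p > 0"
      using pF prime_factors_multiplicity[of C] C0 unfolding F_def v_def by auto
    have "p dvd C" using multiplicity_dvd'[of 1 p C] vp unfolding v_def by simp
    hence "p dvd fact (2 * N)" using Cdvd by (rule dvd_trans)
    hence "p \<le> 2 * N" using prime_dvd_fact_iff[OF pr] by simp
    thus ?thesis using pr vp by simp
  qed
  have Cprod: "C = (\<Prod>p\<in>F. p ^ v p)" unfolding F_def v_def using prime_factorization_nat[OF C0] by simp
  define g1 where "g1 p = (if p * p \<le> 2 * N then 2 * N else 1)" for p :: nat
  define g2 where "g2 p = (if 2 * N < p * p \<and> p \<le> N then p else 1)" for p :: nat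
  define g3 where "g3 p = (if N < p then 2 * N else 1)" for p :: nat
  have bound: "p ^ v p \<le> g1 p * (g2 p * g3 p)" if pF: "p \<in> F" for p
  proof -
    have pr: "prime p" using Fp[OF pF] by simp
    have p0: "p > 0" using prime_gt_0_nat[OF pr] .
    have V1': "p ^ v p \<le> 2 * N" unfolding v_def C_def using V1[OF pr N0] .
    have gg: "1 \<le> g1 p" "1 \<le> g2 p" "1 \<le> g3 p" using p0 N0 by (auto simp: g1_def g2_def g3_def)
    show ?thesis
    proof (cases "p * p \<le> 2 * N")
      case True
      have "1 * 1 \<le> g2 p * g3 p" using gg by (intro mult_le_mono) auto
      hence m: "g1 p * 1 \<le> g1 p * (g2 p * g3 p)" by (intro mult_le_mono2) simp
      have "g1 p = 2 * N" using True by (simp add: g1_def)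
      hence "p ^ v p \<le> g1 p * 1" using V1' by simp
      thus ?thesis using m by (rule le_trans)
    next
      case False
      show ?thesis
      proof (cases "p \<le> N")
        case True
        have "v p \<le> 1" unfolding v_def C_def using V2[OF pr] False by simp
        hence "p ^ v p \<le> p ^ 1" using p0 by (intro power_increasing) auto
        moreover have "g2 p = p" "g3 p = 1" "g1 p = 1" using False True by (auto simp: g1_def g2_def g3_def)
        ultimately show ?thesis by simp
      next
        case False2: False
        have "g3 p = 2 * N" "g1 p = 1" "g2 p = 1" using False False2 by (auto simp: g1_def g2_def g3_def)
        thus ?thesis using V1' by simp
      qed
    qed
  qed
  have "C \<le> (\<Prod>p\<in>F. g1 p * (g2 p * g3 p))" unfolding Cprod by (intro prod_mono) (use bound in auto)
  also have "\<dots> = (\<Prod>p\<in>F. g1 p) * ((\<Prod>p\<in>F. g2 p) * (\<Prod>p\<in>F. g3 p))" by (simp add: prod.distrib)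
  also have "(\<Prod>p\<in>F. g1 p) = (2 * N) ^ card A"
    unfolding g1_def A_def by (rule prod_if_const[OF finF])
  also have "(\<Prod>p\<in>F. g2 p) = (\<Prod>p\<in>B. p)"
    unfolding g2_def B_def by (rule prod_if_id[OF finF])
  also have "(\<Prod>p\<in>F. g3 p) = (2 * N) ^ card D"
    unfolding g3_def D_def by (rule prod_if_const[OF finF])
  finally have Cle: "C \<le> (2 * N) ^ card A * ((\<Prod>p\<in>B. p) * (2 * N) ^ card D)" .
  have Bsub: "B \<subseteq> {p. prime p \<and> p \<le> 2 * N div 3}"
  proof
    fix p assume pB: "p \<in> B"
    hence pF: "p \<in> F" and pN: "p \<le> N" unfolding B_def by auto
    have pr: "prime p" and vp: "v p > 0" using Fp[OF pF] by auto
    have "\<not> 2 * N < 3 * p"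
    proof
      assume "2 * N < 3 * p"
      hence "v p = 0" unfolding v_def C_def using V3[OF pr _ pN] assms by simp
      thus False using vp by simp
    qed
    hence "p \<le> 2 * N div 3" by linarith
    thus "p \<in> {p. prime p \<and> p \<le> 2 * N div 3}" using pr by simp
  qed
  have "(\<Prod>p\<in>B. p) dvd prim (2 * N div 3)"
    unfolding prim_def by (rule prod_dvd_prod_subset[OF fin_primes_le Bsub])
  hence Ble: "(\<Prod>p\<in>B. p) \<le> 4 ^ (2 * N div 3)"
    using prim_pos prim_le dvd_imp_le le_trans by blast
  have Dle: "card D \<le> pi'"
    unfolding pi'_def D_def by (rule card_mono[OF fin_primes_le2]) (use Fp in auto)
  have Asub: "A \<subseteq> {1..nat \<lfloor>sqrt (2 * real N)\<rfloor>}"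
  proof
    fix p assume pA: "p \<in> A"
    hence pF: "p \<in> F" and pp: "p * p \<le> 2 * N" unfolding A_def by auto
    have "real p ^ 2 \<le> 2 * real N" using pp by (simp add: power2_eq_square flip: of_nat_mult)
    hence "real p \<le> sqrt (2 * real N)" by (rule real_le_rsqrt)
    hence "p \<le> nat \<lfloor>sqrt (2 * real N)\<rfloor>" by (rule le_nat_floor)
    moreover have "1 \<le> p" using Fp[OF pF] prime_gt_0_nat by (simp add: Suc_leI)
    ultimately show "p \<in> {1..nat \<lfloor>sqrt (2 * real N)\<rfloor>}" by simp
  qed
  have Ale: "real (card A) \<le> sqrt (2 * real N)"
  proof -
    have "card A \<le> nat \<lfloor>sqrt (2 * real N)\<rfloor>" using card_mono[OF _ Asub] by simp
    hence "real (card A) \<le> real (nat \<lfloor>sqrt (2 * real N)\<rfloor>)" by (simp only: of_nat_le_iff)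
    also have "\<dots> = real_of_int \<lfloor>sqrt (2 * real N)\<rfloor>" by simp
    also have "\<dots> \<le> sqrt (2 * real N)" by (rule of_int_floor_le)
    finally show ?thesis .
  qed
  define L where "L = ln (2 * real N)"
  define a where "a = card A"
  define d where "d = card D"
  have L0: "L > 0" unfolding L_def using N0 by simp
  have cb: "4 ^ N / (2 * real N) \<le> real C" unfolding C_def by (rule central_binomial_lower_bound[OF N0])
  hence cb': "(4::real) ^ N \<le> real C * (2 * real N)" using N0 by (simp add: field_simps)
  have Cle': "real C \<le> (2 * real N) ^ a * (4 ^ (2 * N div 3) * (2 * real N) ^ d)"
  proof -
    have "C \<le> (2 * N) ^ a * (4 ^ (2 * N div 3) * (2 * N) ^ d)"
      using Cle Ble unfolding a_def d_def by (meson le_trans mult_le_mono1 mult_le_mono2)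
    hence "real C \<le> real ((2 * N) ^ a * (4 ^ (2 * N div 3) * (2 * N) ^ d))" by (simp only: of_nat_le_iff)
    thus ?thesis by simp
  qed
  have "real N * ln 4 = ln ((4::real) ^ N)" by (simp add: ln_realpow)
  also have "\<dots> \<le> ln (real C * (2 * real N))" using cb' by (subst ln_le_cancel_iff) (use N0 C0 in auto)
  also have "\<dots> = ln (real C) + L" unfolding L_def using N0 C0 by (simp add: ln_mult)
  also have "ln (real C) \<le> ln ((2 * real N) ^ a * (4 ^ (2 * N div 3) * (2 * real N) ^ d))"
    using Cle' C0 by (subst ln_le_cancel_iff) (use N0 in auto)
  also have "\<dots> = a * L + ((2 * N div 3) * ln 4 + d * L)"
    unfolding L_def using N0 by (simp add: ln_mult ln_realpow algebra_simps)
  finally have main: "real N * ln 4 \<le> a * L + (real (2 * N div 3) * ln 4 + d * L) + L" by simp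
  have t1: "a * L \<le> sqrt (2 * real N) * L" using Ale L0 unfolding a_def by (intro mult_right_mono) auto
  have t2: "d * L \<le> pi' * L" using Dle L0 unfolding d_def by (intro mult_right_mono) auto
  have t3: "real (2 * N div 3) * ln 4 \<le> (2 * real N / 3) * ln 4"
  proof -
    have "real (2 * N div 3) \<le> 2 * real N / 3" by linarith
    thus ?thesis by (intro mult_right_mono) auto
  qed
  have t4: "real N * ln 4 - (2 * real N / 3) * ln 4 = real N / 3 * ln 4" by (simp add: algebra_simps)
  have t5: "real N / 3 * (4/3) \<le> real N / 3 * ln 4" using ln4 by (intro mult_left_mono) auto
  have an: "(1 + sqrt (2 * real N)) * L \<le> 5 / 36 * (2 * real N)"
    unfolding L_def by (rule analytic) (use assms in simp)
  have t6: "(1 + sqrt (2 * real N)) * L = L + sqrt (2 * real N) * L" by (simp add: algebra_simps)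
  have "real N / 6 \<le> pi' * L" using main t1 t2 t3 t4 t5 an t6 by linarith
  thus ?thesis unfolding pi'_def L_def by simp
qed

definition BT :: "nat \<Rightarrow> bool" where
  "BT a \<longleftrightarrow> (\<forall>P::real. 2 \<le> P \<longrightarrow> P \<le> real a \<longrightarrow> (\<exists>p. prime p \<and> P \<le> real p \<and> real p \<le> 2 * P))"

lemma BT2: "BT 2"
  unfolding BT_def
proof (intro allI impI)
  fix P :: real assume "2 \<le> P" "P \<le> real 2"
  hence "P = 2" by simp
  thus "\<exists>p. prime p \<and> P \<le> real p \<and> real p \<le> 2 * P" by (intro exI[of _ 2]) simp
qed

lemma BT_step:
  assumes "BT a" "prime q" "a \<le> q" "q \<le> 2 * a"
  shows "BT q"
  unfolding BT_def
proof (intro allI impI)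
  fix P :: real assume P: "2 \<le> P" "P \<le> real q"
  show "\<exists>p. prime p \<and> P \<le> real p \<and> real p \<le> 2 * P"
  proof (cases "P \<le> real a")
    case True thus ?thesis using assms(1) P unfolding BT_def by blast
  next
    case False
    have "real q \<le> 2 * real a" using assms(4) by (simp flip: of_nat_mult)
    thus ?thesis using False P assms(2) by (intro exI[of _ q]) auto
  qed
qed

lemma BT_3301: "BT 3301"
proof -
  note b = BT2
  have "prime (3::nat)" by (rule prime_trial[where b=2]) (simp_all add: upt_rec)
  with b have b: "BT 3" by (rule BT_step) simp_all
  have "prime (5::nat)" by (rule prime_trial[where b=3]) (simp_all add: upt_rec)
  with b have b: "BT 5" by (rule BT_step) simp_all
  have "prime (7::nat)" by (rule prime_trial[where b=3]) (simp_all add: upt_rec)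
  with b have b: "BT 7" by (rule BT_step) simp_all
  have "prime (13::nat)" by (rule prime_trial[where b=4]) (simp_all add: upt_rec)
  with b have b: "BT 13" by (rule BT_step) simp_all
  have "prime (23::nat)" by (rule prime_trial[where b=5]) (simp_all add: upt_rec)
  with b have b: "BT 23" by (rule BT_step) simp_all
  have "prime (43::nat)" by (rule prime_trial[where b=7]) (simp_all add: upt_rec)
  with b have b: "BT 43" by (rule BT_step) simp_all
  have "prime (83::nat)" by (rule prime_trial[where b=10]) (simp_all add: upt_rec)
  with b have b: "BT 83" by (rule BT_step) simp_all
  have "prime (163::nat)" by (rule prime_trial[where b=13]) (simp_all add: upt_rec)
  with b have b: "BT 163" by (rule BT_step) simp_all
  have "prime (317::nat)" by (rule prime_trial[where b=18]) (simp_all add: upt_rec)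
  with b have b: "BT 317" by (rule BT_step) simp_all
  have "prime (631::nat)" by (rule prime_trial[where b=26]) (simp_all add: upt_rec)
  with b have b: "BT 631" by (rule BT_step) simp_all
  have "prime (1259::nat)" by (rule prime_trial[where b=36]) (simp_all add: upt_rec)
  with b have b: "BT 1259" by (rule BT_step) simp_all
  have "prime (2503::nat)" by (rule prime_trial[where b=51]) (simp_all add: upt_rec)
  with b have b: "BT 2503" by (rule BT_step) simp_all
  have "prime (3301::nat)" by (rule prime_trial[where b=58]) (simp_all add: upt_rec)
  with b have b: "BT 3301" by (rule BT_step) simp_all
  show ?thesis using b .
qed

lemma primes_in_finite: "finite (primes_in P)"
  unfolding primes_in_def
  by (rule finite_subset[of _ "{..nat \<lfloor>2 * P\<rfloor>}"]) (auto intro: le_nat_floor)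

lemma cheb:
  fixes P :: real
  assumes "2 \<le> P"
  shows "card (primes_in P) > 0 \<and> P \<le> 7000 * real (card (primes_in P)) * ln P"
proof (cases "P \<le> 3301")
  case True
  then obtain p where p: "prime p" "P \<le> real p" "real p \<le> 2 * P"
    using BT_3301 assms unfolding BT_def by force
  hence "p \<in> primes_in P" unfolding primes_in_def by simp
  hence c1: "card (primes_in P) \<ge> 1" using primes_in_finite
    by (metis One_nat_def Suc_leI card_gt_0_iff empty_iff)
  have "ln 2 \<le> ln P" using assms by simp
  hence lnP: "2/3 \<le> ln P" using ln2_ge_two_thirds by linarith
  have "P \<le> 7000 * 1 * (2/3)" using True by simp
  also have "\<dots> \<le> 7000 * real (card (primes_in P)) * ln P"
    using c1 lnP by (intro mult_mono) auto
  finally show ?thesis using c1 by simp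
next
  case False
  define N where "N = nat \<lfloor>P\<rfloor>"
  have NP: "real N \<le> P" "P < real N + 1" unfolding N_def using assms by linarith+
  have N0: "3281 \<le> N" using False NP by linarith
  define S where "S = {p. prime p \<and> N < p \<and> p \<le> 2 * N}"
  have Ssub: "S \<subseteq> primes_in P"
  proof
    fix p assume "p \<in> S"
    hence p: "prime p" "N + 1 \<le> p" "p \<le> 2 * N" unfolding S_def by auto
    have "real N + 1 \<le> real p" using p(2) by (simp flip: of_nat_Suc)
    moreover have "real p \<le> 2 * real N" using p(3) by (simp flip: of_nat_mult)
    ultimately show "p \<in> primes_in P" unfolding primes_in_def using p NP by auto
  qed
  have cS: "card S \<le> card (primes_in P)" by (rule card_mono[OF primes_in_finite Ssub])
  have er: "real N / 6 \<le> real (card S) * ln (2 * real N)" unfolding S_def by (rule erdos[OF N0])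
  have lnP0: "0 < ln P" using assms by simp
  have "2 * real N \<le> 2 * P" using NP by simp
  also have "2 * P \<le> P * P" using assms by (intro mult_right_mono) auto
  finally have "ln (2 * real N) \<le> ln (P * P)"
    using N0 assms by (subst ln_le_cancel_iff) auto
  hence lnle: "ln (2 * real N) \<le> 2 * ln P" using assms by (simp add: ln_mult)
  have "real N / 6 \<le> real (card S) * (2 * ln P)"
  proof -
    have "real (card S) * ln (2 * real N) \<le> real (card S) * (2 * ln P)"
      using lnle by (intro mult_left_mono) auto
    thus ?thesis using er by linarith
  qed
  hence "P / 2 / 6 \<le> real (card S) * (2 * ln P)" using NP assms by linarith
  hence a: "P \<le> 24 * real (card S) * ln P" by (simp add: algebra_simps)
  have "24 * real (card S) * ln P \<le> 7000 * real (card (primes_in P)) * ln P"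
    using cS lnP0 by (intro mult_right_mono) auto
  hence b: "P \<le> 7000 * real (card (primes_in P)) * ln P" using a by linarith
  have "card (primes_in P) > 0"
  proof (rule ccontr)
    assume "\<not> card (primes_in P) > 0"
    hence "card (primes_in P) = 0" by simp
    thus False using b assms by simp
  qed
  thus ?thesis using b by simp
qed




lemma few_primes_divide:
  fixes x y n :: nat and P :: real
  assumes "x \<noteq> y" "x < 2 ^ n" "y < 2 ^ n" "2 \<le> P"
  shows "real (card {p\<in>primes_in P. y mod p = x mod p}) \<le> real n * ln 2 / ln P"
proof -
  define S where "S = {p\<in>primes_in P. y mod p = x mod p}"
  define D where "D = (if x < y then y - x else x - y)"
  have D0: "D > 0" using assms(1) unfolding D_def by auto
  have D2: "D < 2 ^ n" using assms(2,3) unfolding D_def by auto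
  have finS: "finite S" unfolding S_def using primes_in_finite by simp
  have Sp: "prime p \<and> p dvd D" if "p \<in> S" for p
  proof -
    have pr: "prime p" and eq: "y mod p = x mod p" using that unfolding S_def primes_in_def by auto
    have "p dvd D"
    proof (cases "x < y")
      case True thus ?thesis unfolding D_def using eq mod_eq_dvd_iff_nat[of x y p] by simp
    next
      case False thus ?thesis unfolding D_def using eq mod_eq_dvd_iff_nat[of y x p] by simp
    qed
    thus ?thesis using pr by simp
  qed
  have "(\<Prod>p\<in>S. p) \<le> D" by (rule primes_dvd_prod_le[OF D0 Sp])
  hence "real (\<Prod>p\<in>S. p) \<le> real D" by (simp only: of_nat_le_iff)
  moreover have "P ^ card S \<le> real (\<Prod>p\<in>S. p)"
  proof -
    have "P ^ card S = (\<Prod>p\<in>S. P)" by simp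
    also have "\<dots> \<le> (\<Prod>p\<in>S. real p)"
      using assms(4) by (intro prod_mono) (auto simp: S_def primes_in_def)
    finally show ?thesis by simp
  qed
  moreover have "real D < 2 ^ n"
  proof -
    have "real D < real (2 ^ n)" using D2 by (simp only: of_nat_less_iff)
    thus ?thesis by simp
  qed
  ultimately have lt: "P ^ card S < 2 ^ n" by linarith
  have P0: "P > 0" using assms by simp
  have "ln (P ^ card S) < ln (2 ^ n)" using lt P0 by (subst ln_less_cancel_iff) auto
  hence "real (card S) * ln P < real n * ln 2" by (simp add: ln_realpow)
  moreover have "ln P > 0" using assms by simp
  ultimately have "real (card S) < real n * ln 2 / ln P" by (simp add: field_simps)
  thus ?thesis unfolding S_def by simp
qed

lemma main_comb:
  fixes X :: "nat set" and n m k :: nat and P :: real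
  assumes finX: "finite X" and Xb: "\<And>t. t \<in> X \<Longrightarrow> t < 2 ^ n" and n1: "1 \<le> n"
    and mM: "m \<le> card X" and P2: "2 \<le> P" and Pm: "P \<le> 2 * real m"
    and kdef: "k = nat \<lceil>real m / (4 * P)\<rceil>"
  shows "(1 / 56016) / real n \<le>
    (\<Sum>p\<in>primes_in P. real (card {r. r < p \<and> k \<le> card {t\<in>X. t mod p = r}}) / real p)
      / real (card (primes_in P))"
proof -
  define PI where "PI = primes_in P"
  define M where "M = card X"
  define Nr where "Nr p r = card {t\<in>X. t mod p = r}" for p r :: nat
  define Q where "Q p = (\<Sum>x\<in>X. Nr p (x mod p))" for p :: nat
  define R where "R p = {r. r < p \<and> k \<le> Nr p r}" for p :: nat
  have finPI: "finite PI" unfolding PI_def by (rule primes_in_finite)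
  have ch: "card PI > 0 \<and> P \<le> 7000 * real (card PI) * ln P" unfolding PI_def by (rule cheb[OF P2])
  have m1: "1 \<le> m" using P2 Pm by linarith
  have M1: "1 \<le> M" using m1 mM unfolding M_def by simp
  have pPI: "prime p \<and> P \<le> real p \<and> real p \<le> 2 * P" if "p \<in> PI" for p
    using that unfolding PI_def primes_in_def by simp
  have k1: "1 \<le> k" and kb: "real k - 1 \<le> real m / (4 * P)"
  proof -
    have pos: "real m / (4 * P) > 0" using m1 P2 by simp
    hence "\<lceil>real m / (4 * P)\<rceil> > 0" by (simp only: zero_less_ceiling)
    thus "1 \<le> k" unfolding kdef by (simp add: le_nat_iff)
    have "real k = real_of_int \<lceil>real m / (4 * P)\<rceil>" unfolding kdef using pos by simp
    thus "real k - 1 \<le> real m / (4 * P)" by linarith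
  qed
  have claim1: "real M ^ 2 \<le> 4 * real (card (R p)) * real (Q p)" if pP: "p \<in> PI" for p
  proof -
    have p0: "p > 0" using pPI[OF pP] prime_gt_0_nat by blast
    have pb: "real p \<le> 2 * P" using pPI[OF pP] by simp
    have img: "(\<lambda>x. x mod p) ` X \<subseteq> {..<p}" using p0 by auto
    have sumN: "(\<Sum>r<p. Nr p r) = M"
      unfolding Nr_def M_def using sum.group[OF finX _ img, of "\<lambda>_. 1::nat"] by simp
    have sumN2: "(\<Sum>r<p. Nr p r ^ 2) = Q p"
    proof -
      have "(\<Sum>r<p. Nr p r ^ 2) = (\<Sum>r<p. \<Sum>x\<in>{x\<in>X. x mod p = r}. Nr p (x mod p))"
      proof (intro sum.cong refl)
        fix r assume "r \<in> {..<p}"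
        have "(\<Sum>x\<in>{x\<in>X. x mod p = r}. Nr p (x mod p)) = (\<Sum>x\<in>{x\<in>X. x mod p = r}. Nr p r)" by simp
        also have "\<dots> = card {x\<in>X. x mod p = r} * Nr p r" by simp
        also have "card {x\<in>X. x mod p = r} = Nr p r" unfolding Nr_def ..
        finally have e: "(\<Sum>x\<in>{x\<in>X. x mod p = r}. Nr p (x mod p)) = Nr p r * Nr p r" .
        show "Nr p r ^ 2 = (\<Sum>x\<in>{x\<in>X. x mod p = r}. Nr p (x mod p))" by (metis e power2_eq_square)
      qed
      also have "\<dots> = Q p" unfolding Q_def using sum.group[OF finX _ img, of "\<lambda>x. Nr p (x mod p)"] by simp
      finally show ?thesis .
    qed
    have Rsub: "R p \<subseteq> {..<p}" unfolding R_def by auto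
    have finR: "finite (R p)" using Rsub finite_subset by blast
    have "real M = (\<Sum>r<p. real (Nr p r))" using sumN by (simp flip: of_nat_sum)
    also have "\<dots> = (\<Sum>r\<in>R p. real (Nr p r)) + (\<Sum>r\<in>{..<p} - R p. real (Nr p r))"
      using Rsub by (subst sum.subset_diff[of "R p" "{..<p}"]) auto
    also have "(\<Sum>r\<in>{..<p} - R p. real (Nr p r)) \<le> (\<Sum>r\<in>{..<p} - R p. real k - 1)"
    proof (intro sum_mono)
      fix r assume "r \<in> {..<p} - R p"
      hence "Nr p r < k" unfolding R_def by auto
      thus "real (Nr p r) \<le> real k - 1" by linarith
    qed
    also have "\<dots> = real (card ({..<p} - R p)) * (real k - 1)" by simp
    also have "\<dots> \<le> real p * (real k - 1)"
    proof (intro mult_right_mono)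
      show "real (card ({..<p} - R p)) \<le> real p" using card_mono[of "{..<p}" "{..<p} - R p"] by auto
    qed (use k1 in simp)
    also have "\<dots> \<le> (2 * P) * (real m / (4 * P))"
      using pb kb k1 by (intro mult_mono) auto
    also have "\<dots> = real m / 2" using P2 by (simp add: field_simps)
    finally have "real M \<le> (\<Sum>r\<in>R p. real (Nr p r)) + real m / 2" by simp
    hence SR: "real M / 2 \<le> (\<Sum>r\<in>R p. real (Nr p r))" using mM unfolding M_def by simp
    have "(real M / 2) ^ 2 \<le> (\<Sum>r\<in>R p. real (Nr p r)) ^ 2" using SR by (intro power_mono) auto
    also have "\<dots> = (\<Sum>r\<in>R p. 1 * real (Nr p r)) ^ 2" by simp
    also have "\<dots> \<le> (\<Sum>r\<in>R p. 1\<^sup>2) * (\<Sum>r\<in>R p. (real (Nr p r))\<^sup>2)"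
      by (rule Cauchy_Schwarz_ineq_sum)
    also have "(\<Sum>r\<in>R p. (real (Nr p r))\<^sup>2) \<le> (\<Sum>r<p. (real (Nr p r))\<^sup>2)"
      using Rsub by (intro sum_mono2) auto
    also have "\<dots> = real (Q p)" using sumN2 by (simp flip: of_nat_sum of_nat_power)
    finally have "(real M / 2) ^ 2 \<le> real (card (R p)) * real (Q p)"
      by (simp add: mult_left_mono)
    thus ?thesis by (simp add: power_divide)
  qed
  have QM: "real M \<le> real (Q p)" if pP: "p \<in> PI" for p
  proof -
    have "M = (\<Sum>x\<in>X. 1)" unfolding M_def by simp
    also have "\<dots> \<le> Q p" unfolding Q_def Nr_def
    proof (intro sum_mono)
      fix x assume "x \<in> X"
      hence "x \<in> {t\<in>X. t mod p = x mod p}" by simp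
      hence "{t\<in>X. t mod p = x mod p} \<noteq> {}" by blast
      moreover have "finite {t\<in>X. t mod p = x mod p}" using finX by simp
      ultimately show "1 \<le> card {t\<in>X. t mod p = x mod p}"
        by (simp add: Suc_leI card_gt_0_iff)
    qed
    finally show ?thesis by simp
  qed
  define Lb where "Lb = real n * ln 2 / ln P"
  define pi where "pi = real (card PI)"
  have lnP: "ln P > 0" using P2 by simp
  have Lb0: "Lb \<ge> 0" unfolding Lb_def using lnP by simp
  have pi0: "pi > 0" using ch unfolding pi_def by simp
  have Qpos: "real (Q p) > 0" if "p \<in> PI" for p using QM[OF that] M1 by linarith
  have Nr_sum: "real (Nr p (x mod p)) = (\<Sum>y\<in>X. if y mod p = x mod p then 1 else 0)" for p x
  proof -
    have "real (Nr p (x mod p)) = (\<Sum>y\<in>{y\<in>X. y mod p = x mod p}. (1::real))" unfolding Nr_def by simp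
    also have "\<dots> = (\<Sum>y\<in>X. if y mod p = x mod p then 1 else 0)" by (rule sum.inter_filter[OF finX])
    finally show ?thesis .
  qed
  have "(\<Sum>p\<in>PI. real (Q p)) = (\<Sum>p\<in>PI. \<Sum>x\<in>X. \<Sum>y\<in>X. (if y mod p = x mod p then 1 else 0::real))"
    unfolding Q_def by (simp add: Nr_sum)
  also have "\<dots> = (\<Sum>x\<in>X. \<Sum>p\<in>PI. \<Sum>y\<in>X. (if y mod p = x mod p then 1 else 0::real))"
    by (rule sum.swap)
  also have "\<dots> = (\<Sum>x\<in>X. \<Sum>y\<in>X. \<Sum>p\<in>PI. (if y mod p = x mod p then 1 else 0::real))"
    by (rule sum.cong[OF refl], rule sum.swap)
  also have "\<dots> = (\<Sum>x\<in>X. \<Sum>y\<in>X. real (card {p\<in>PI. y mod p = x mod p}))"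
  proof (intro sum.cong refl)
    fix x y
    have "(\<Sum>p\<in>PI. (if y mod p = x mod p then 1 else 0::real)) = (\<Sum>p\<in>{p\<in>PI. y mod p = x mod p}. 1)"
      by (rule sum.inter_filter[OF finPI, symmetric])
    thus "(\<Sum>p\<in>PI. (if y mod p = x mod p then 1 else 0::real)) = real (card {p\<in>PI. y mod p = x mod p})"
      by simp
  qed
  also have "\<dots> \<le> (\<Sum>x\<in>X. \<Sum>y\<in>X. (if y = x then pi else 0) + Lb)"
  proof (intro sum_mono)
    fix x y assume x: "x \<in> X" and y: "y \<in> X"
    show "real (card {p\<in>PI. y mod p = x mod p}) \<le> (if y = x then pi else 0) + Lb"
    proof (cases "y = x")
      case True
      have "card {p\<in>PI. y mod p = x mod p} \<le> card PI" by (rule card_mono[OF finPI]) auto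
      thus ?thesis using True Lb0 unfolding pi_def by simp
    next
      case False
      have "real (card {p\<in>PI. y mod p = x mod p}) \<le> Lb"
        unfolding PI_def Lb_def by (rule few_primes_divide) (use False Xb x y P2 in auto)
      thus ?thesis using False by simp
    qed
  qed
  also have "\<dots> = (\<Sum>x\<in>X. pi + real M * Lb)"
  proof (intro sum.cong refl)
    fix x assume x: "x \<in> X"
    have "(\<Sum>y\<in>X. (if y = x then pi else 0) + Lb) = (\<Sum>y\<in>X. (if y = x then pi else 0)) + (\<Sum>y\<in>X. Lb)"
      by (rule sum.distrib)
    also have "(\<Sum>y\<in>X. (if y = x then pi else 0)) = pi" using x finX by (simp add: sum.delta)
    finally show "(\<Sum>y\<in>X. (if y = x then pi else 0) + Lb) = pi + real M * Lb" unfolding M_def by simp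
  qed
  also have "\<dots> = real M * pi + real M * (real M * Lb)" unfolding M_def by (simp add: algebra_simps)
  finally have claim2: "(\<Sum>p\<in>PI. real (Q p)) \<le> real M * pi + real M * (real M * Lb)" .
  have claim3: "pi ^ 2 \<le> (\<Sum>p\<in>PI. real (Q p)) * (\<Sum>p\<in>PI. 1 / real (Q p))"
  proof -
    have "(\<Sum>p\<in>PI. sqrt (real (Q p)) * (1 / sqrt (real (Q p)))) = (\<Sum>p\<in>PI. 1)"
      by (rule sum.cong[OF refl]) (use Qpos in force)
    hence "pi ^ 2 = (\<Sum>p\<in>PI. sqrt (real (Q p)) * (1 / sqrt (real (Q p)))) ^ 2"
      unfolding pi_def by simp
    also have "\<dots> \<le> (\<Sum>p\<in>PI. (sqrt (real (Q p)))\<^sup>2) * (\<Sum>p\<in>PI. (1 / sqrt (real (Q p)))\<^sup>2)"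
      by (rule Cauchy_Schwarz_ineq_sum)
    also have "\<dots> = (\<Sum>p\<in>PI. real (Q p)) * (\<Sum>p\<in>PI. 1 / real (Q p))"
      using Qpos by (simp add: power_divide)
    finally show ?thesis .
  qed
  define SQ where "SQ = (\<Sum>p\<in>PI. real (Q p))"
  define SI where "SI = (\<Sum>p\<in>PI. 1 / real (Q p))"
  define T where "T = (\<Sum>p\<in>PI. real (card (R p)) / real p)"
  have SQ0: "SQ > 0" unfolding SQ_def using Qpos ch by (intro sum_pos finPI) (auto simp: PI_def)
  have Tge: "T \<ge> (real M ^ 2 / (8 * P)) * SI"
  proof -
    have "(real M ^ 2 / (8 * P)) * SI = (\<Sum>p\<in>PI. (real M ^ 2 / (8 * P)) * (1 / real (Q p)))"
      unfolding SI_def by (rule sum_distrib_left)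
    also have "\<dots> \<le> T" unfolding T_def
    proof (intro sum_mono)
      fix p assume pP: "p \<in> PI"
      have p0: "real p > 0" using pPI[OF pP] P2 by linarith
      have pb: "real p \<le> 2 * P" using pPI[OF pP] by simp
      have c1: "real M ^ 2 / (4 * real (Q p)) \<le> real (card (R p))"
        using claim1[OF pP] Qpos[OF pP] by (simp add: divide_le_eq mult.commute mult.left_commute)
      have "(real M ^ 2 / (8 * P)) * (1 / real (Q p)) = (real M ^ 2 / (4 * real (Q p))) / (2 * P)"
        by (simp add: field_simps)
      also have "\<dots> \<le> real (card (R p)) / (2 * P)" using c1 P2 by (intro divide_right_mono) auto
      also have "\<dots> \<le> real (card (R p)) / real p" using p0 pb by (intro divide_left_mono) auto
      finally show "(real M ^ 2 / (8 * P)) * (1 / real (Q p)) \<le> real (card (R p)) / real p" .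
    qed
    finally show ?thesis .
  qed
  have SIge: "SI \<ge> pi ^ 2 / SQ" using claim3 SQ0 unfolding SI_def SQ_def by (simp add: divide_le_eq mult.commute)
  have T_low: "T \<ge> real M ^ 2 * pi ^ 2 / (8 * P * SQ)"
  proof -
    have "real M ^ 2 * pi ^ 2 / (8 * P * SQ) = (real M ^ 2 / (8 * P)) * (pi ^ 2 / SQ)" by simp
    also have "\<dots> \<le> (real M ^ 2 / (8 * P)) * SI" using SIge P2 by (intro mult_left_mono) auto
    finally show ?thesis using Tge by linarith
  qed
  define Z where "Z = real M * real M * pi"
  have Z0: "Z > 0" unfolding Z_def using M1 pi0 by simp
  have PM: "P \<le> 2 * real M" using Pm mM unfolding M_def by linarith
  have f1: "P * (real M * pi) \<le> 2 * Z"
  proof -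
    have "P * (real M * pi) \<le> (2 * real M) * (real M * pi)" using PM M1 pi0 by (intro mult_right_mono) auto
    thus ?thesis unfolding Z_def by (simp add: algebra_simps)
  qed
  have PLb: "P * Lb \<le> 7000 * pi * real n"
  proof -
    have "P * Lb = real n * ln 2 * (P / ln P)" unfolding Lb_def by (simp add: field_simps)
    also have "P / ln P \<le> 7000 * pi" using ch lnP unfolding pi_def by (simp add: divide_le_eq)
    hence "real n * ln 2 * (P / ln P) \<le> real n * ln 2 * (7000 * pi)" by (intro mult_left_mono) auto
    also have "real n * ln 2 * (7000 * pi) \<le> real n * 1 * (7000 * pi)"
      using ln_2_less_1 pi0 by (intro mult_right_mono mult_left_mono) auto
    finally show ?thesis by (simp add: mult.commute mult.left_commute)
  qed
  have f2: "P * (real M * (real M * Lb)) \<le> 7000 * real n * Z"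
  proof -
    have "P * (real M * (real M * Lb)) = (real M * real M) * (P * Lb)" by (simp add: algebra_simps)
    also have "\<dots> \<le> (real M * real M) * (7000 * pi * real n)" using PLb by (intro mult_left_mono) auto
    also have "\<dots> = 7000 * real n * Z" unfolding Z_def by (simp add: algebra_simps)
    finally show ?thesis .
  qed
  have f3: "P * SQ \<le> P * (real M * pi + real M * (real M * Lb))"
    using claim2 P2 unfolding SQ_def by (intro mult_left_mono) auto
  have f4: "Z \<le> real n * Z" using n1 Z0 by simp
  have key: "(1/56016) * (8 * P * SQ) \<le> real n * Z"
    using f1 f2 f3 f4 by (simp add: algebra_simps) 
  have n0: "real n > 0" using n1 by simp
  have "(1/56016) / real n \<le> Z / (8 * P * SQ)"
    using key n0 SQ0 P2 by (simp add: divide_simps mult.commute)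
  also have "Z / (8 * P * SQ) = (real M ^ 2 * pi ^ 2 / (8 * P * SQ)) / pi"
    unfolding Z_def using pi0 by (simp add: power2_eq_square)
  also have "\<dots> \<le> T / pi" using T_low pi0 by (intro divide_right_mono) auto
  finally have fin: "(1/56016) / real n \<le> T / pi" .
  have "T = (\<Sum>p\<in>primes_in P. real (card {r. r < p \<and> k \<le> card {t\<in>X. t mod p = r}}) / real p)"
    unfolding T_def PI_def R_def Nr_def by simp
  thus ?thesis using fin unfolding pi_def PI_def by simp
qed

theorem lemma3p6:
  shows "\<exists>c::real. c > 0 \<and>
    (\<forall>(n::nat) (w::nat \<Rightarrow> nat) (\<Delta>::real) (j::nat) (P::real).
      (0 < w 1) \<longrightarrow> (\<forall>i\<in>{1..n}. \<forall>i'\<in>{1..n}. i < i' \<longrightarrow> w i < w i') \<longrightarrow>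
      (\<Sum>i=1..n. w i) < 2^n - 1 \<longrightarrow>
      2 powr (real n / 2) \<le> \<Delta> \<longrightarrow> \<Delta> \<le> real (dpar n w) \<longrightarrow> dpar n w < 2^n \<longrightarrow>
      j < n \<longrightarrow>
      real (card {t. freq n w t > 2^j}) > \<Delta> / (2^(j+1) * real n) \<longrightarrow>
      (let h = 2^j + 1;
           m = nat \<lceil>\<Delta> / (2^(j+1) * real n)\<rceil>;
           k = nat \<lceil>real m / (4 * P)\<rceil>
       in 2 \<le> P \<longrightarrow> P \<le> 2 * real m \<longrightarrow>
          success_prob n w P h k \<ge> c / real n))"
proof (intro exI[of _ "1/56016"] conjI allI impI)
  show "(0::real) < 1/56016" by simp
next
  fix n :: nat and w :: "nat \<Rightarrow> nat" and \<Delta> :: real and j :: nat and P :: real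
  assume hsum: "(\<Sum>i=1..n. w i) < 2^n - 1" and hj: "j < n"
    and hX: "real (card {t. freq n w t > 2^j}) > \<Delta> / (2^(j+1) * real n)"
  define X where "X = {t. 2 ^ j < freq n w t}"
  have Xb: "t < 2 ^ n" if "t \<in> X" for t
  proof -
    have "card {S. S \<subseteq> {1..n} \<and> wsum w S = t} > 0" using that unfolding X_def freq_def by simp
    hence "{S. S \<subseteq> {1..n} \<and> wsum w S = t} \<noteq> {}" by (metis card.empty less_irrefl)
    then obtain S where S: "S \<subseteq> {1..n}" "wsum w S = t" by blast
    have "t = (\<Sum>i\<in>S. w i)" using S unfolding wsum_def by simp
    also have "\<dots> \<le> (\<Sum>i=1..n. w i)" using S by (intro sum_mono2) auto
    finally show ?thesis using hsum by linarith
  qed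
  have finX: "finite X" using Xb by (intro finite_subset[of X "{..<2^n}"]) auto
  have heavy: "heavy_count n w p r (2 ^ j + 1) = card {t\<in>X. t mod p = r}" for p r
  proof -
    have "{t. 2 ^ j + 1 \<le> card {S. S \<subseteq> {1..n} \<and> wsum w S mod p = r \<and> wsum w S = t}} = {t\<in>X. t mod p = r}"
    proof (intro Collect_cong)
      fix t
      show "(2 ^ j + 1 \<le> card {S. S \<subseteq> {1..n} \<and> wsum w S mod p = r \<and> wsum w S = t}) = (t \<in> X \<and> t mod p = r)"
      proof (cases "t mod p = r")
        case True
        hence E: "{S. S \<subseteq> {1..n} \<and> wsum w S mod p = r \<and> wsum w S = t} = {S. S \<subseteq> {1..n} \<and> wsum w S = t}" by auto
        show ?thesis unfolding E using True unfolding X_def freq_def by auto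
      next
        case False
        hence E: "{S. S \<subseteq> {1..n} \<and> wsum w S mod p = r \<and> wsum w S = t} = {}" by auto
        show ?thesis unfolding E using False by simp
      qed
    qed
    thus ?thesis unfolding heavy_count_def by simp
  qed
  have n1: "1 \<le> n" using hj by simp
  have mM: "nat \<lceil>\<Delta> / (2^(j+1) * real n)\<rceil> \<le> card X"
  proof -
    have "\<Delta> / (2^(j+1) * real n) \<le> real (card X)" using hX unfolding X_def by simp
    hence "\<lceil>\<Delta> / (2^(j+1) * real n)\<rceil> \<le> int (card X)" by (simp add: ceiling_le_iff)
    thus ?thesis by linarith
  qed
  show "let h = 2^j + 1;
           m = nat \<lceil>\<Delta> / (2^(j+1) * real n)\<rceil>;
           k = nat \<lceil>real m / (4 * P)\<rceil>
       in 2 \<le> P \<longrightarrow> P \<le> 2 * real m \<longrightarrow>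
          success_prob n w P h k \<ge> 1/56016 / real n"
    unfolding Let_def
  proof (intro impI)
    assume P2: "2 \<le> P" and Pm: "P \<le> 2 * real (nat \<lceil>\<Delta> / (2^(j+1) * real n)\<rceil>)"
    have "(1 / 56016) / real n \<le>
      (\<Sum>p\<in>primes_in P. real (card {r. r < p \<and> nat \<lceil>real (nat \<lceil>\<Delta> / (2^(j+1) * real n)\<rceil>) / (4 * P)\<rceil>
          \<le> card {t\<in>X. t mod p = r}}) / real p) / real (card (primes_in P))"
      by (rule main_comb[OF finX Xb n1 mM P2 Pm refl])
    thus "1/56016 / real n \<le> success_prob n w P (2 ^ j + 1)
        (nat \<lceil>real (nat \<lceil>\<Delta> / (2^(j+1) * real n)\<rceil>) / (4 * P)\<rceil>)"
      unfolding success_prob_def heavy by simp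
  qed
qed

end
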